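(* Let $\Psi_n$ be a real $K\times K$ matrix and $c\in(0,1)$. For every integer $s$ with $1\le s\le K/2$ and every $1<p\le2$, $$\kappa_{p,J}\ge C(p)\,s^{-1/p}\,\kappa_{\rm RE}(2s)\qquad\text{for all }J\subseteq\{1,\dots,K\}\text{ with }|J|\le s,$$ where $C(p)=2^{-1/p-1/2}(1-c)\Big(1+\frac{1+c}{1-c}(p-1)^{-1/p}\Big)^{-1}$.
   Context: $\Delta_J$ zeroes coordinates outside $J$, $J^c$ complement. $C_J=\{\Delta\in\mathbb R^K:|\Delta_{J^c}|_1\le\frac{1+c}{1-c}|\Delta_J|_1\}$; $\kappa_{p,J}=\inf\{|\Psi_n\Delta|_\infty:\Delta\in C_J,|\Delta|_p=1\}$. $\kappa_{{\rm RE},J}=\inf_{\Delta\in C_J\setminus\{0\}}\frac{|\Delta^T\Psi_n\Delta|}{|\Delta_J|_2^2}$ (ratio with zero denominator is $+\infty$) and $\kappa_{\rm RE}(m)=\min_{|J|\le m}\kappa_{{\rm RE},J}$. *)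

theory Defs
  imports "HOL-Analysis.Analysis" "HOL-Library.Extended_Real"
begin

text \<open>Vectors in R^K are modelled as real^'n with K = CARD('n); the index set
 {1..K} is UNIV :: 'n set.\<close>

definition restr :: "'n::finite set \<Rightarrow> real^'n \<Rightarrow> real^'n" where
  "restr J x = (\<chi> i. if i \<in> J then x $ i else 0)"

definition lpnorm :: "real \<Rightarrow> real^'n::finite \<Rightarrow> real" where
  "lpnorm p x = (\<Sum>i\<in>UNIV. \<bar>x $ i\<bar> powr p) powr (1 / p)"

definition l1norm :: "real^'n::finite \<Rightarrow> real" where
  "l1norm x = (\<Sum>i\<in>UNIV. \<bar>x $ i\<bar>)"

definition supnorm :: "real^'n::finite \<Rightarrow> real" where
  "supnorm x = Max (range (\<lambda>i. \<bar>x $ i\<bar>))"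

definition cone :: "real \<Rightarrow> 'n::finite set \<Rightarrow> (real^'n) set" where
  "cone c J = {x. l1norm (restr (- J) x) \<le> (1 + c) / (1 - c) * l1norm (restr J x)}"

text \<open>kappa_{p,J}; the infimum is taken in the extended reals (inf of empty set = +infinity).\<close>
definition kappa_p :: "real^'n^'n::finite \<Rightarrow> real \<Rightarrow> real \<Rightarrow> 'n set \<Rightarrow> ereal" where
  "kappa_p Psi c p J =
     Inf {ereal (supnorm (Psi *v x)) | x. x \<in> cone c J \<and> lpnorm p x = 1}"

definition kappa_RE_J :: "real^'n^'n::finite \<Rightarrow> real \<Rightarrow> 'n set \<Rightarrow> ereal" where
  "kappa_RE_J Psi c J =
     Inf ((\<lambda>x. if (\<Sum>i\<in>UNIV. (restr J x $ i)^2) = 0 then \<infinity>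
               else ereal (\<bar>x \<bullet> (Psi *v x)\<bar> / (\<Sum>i\<in>UNIV. (restr J x $ i)^2)))
          ` (cone c J - {0}))"

text \<open>kappa_RE(m) = min over |J| <= m (finitely many J, so min = Inf).\<close>
definition kappa_RE :: "real^'n^'n::finite \<Rightarrow> real \<Rightarrow> nat \<Rightarrow> ereal" where
  "kappa_RE Psi c m = Inf {kappa_RE_J Psi c J | J. card J \<le> m}"

definition Cp :: "real \<Rightarrow> real \<Rightarrow> real" where
  "Cp c p = 2 powr (- 1 / p - 1 / 2) * (1 - c) *
            inverse (1 + (1 + c) / (1 - c) * (p - 1) powr (- 1 / p))"

end

theory Submission
  imports Defs
begin

lemma superadd_powr:
  fixes r p :: real assumes "0 \<le> r" "1 \<le> p"
  shows "1 + r powr p \<le> (1 + r) powr p"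
proof -
  have e: "(1+r) powr p = (1+r) powr (p-1) * (1+r)"
    using powr_add[of "1+r" "p-1" 1] assms by simp
  have h1: "1 \<le> (1+r) powr (p-1)" using assms by (simp add: ge_one_powr_ge_zero)
  have h2: "r powr (p-1) \<le> (1+r) powr (p-1)" using assms by (intro powr_mono2) auto
  have h3: "r powr p = r powr (p-1) * r"
  proof (cases "r = 0")
    case True then show ?thesis using assms by simp
  next
    case False then show ?thesis using powr_add[of r "p-1" 1] assms by simp
  qed
  have "1 + r powr (p-1) * r \<le> (1+r) powr (p-1) + (1+r) powr (p-1) * r"
    using h1 h2 assms by (intro add_mono mult_right_mono) auto
  then show ?thesis using e h3 by (simp add: algebra_simps)
qed

lemma powr_le_cancel:
  fixes x y p :: real assumes "0 < p" "0 \<le> x" "0 \<le> y" "x powr p \<le> y powr p"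
  shows "x \<le> y"
  using assms by (metis not_le powr_less_mono2)

lemma core:
  fixes s p r a Q A L m :: real
  assumes s1: "1 \<le> s" and p1: "1 < p" and p2: "p \<le> 2" and r0: "0 \<le> r" and ra: "r \<le> a"
    and Q0: "0 < Q" and A0: "0 \<le> A" and L0: "0 \<le> L" and LA: "L \<le> r * A"
    and AQ: "A^2 \<le> s * Q" and m0: "0 < m" and ms: "m \<le> 2 * s"
    and one: "1 \<le> m powr (1 - p/2) * Q powr (p/2) + (L/s) powr (p-1) * L"
  shows "2 powr (1/2 - 1/p) * s powr (-1/p) * A \<le> (1 + a) * Q"
proof -
  define u where "u = sqrt (Q / s)"
  have u0: "0 < u" using Q0 s1 by (simp add: u_def)
  have Qu: "Q = s * u^2" using Q0 s1 by (simp add: u_def)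
  have sQ: "sqrt (s * Q) = s * u"
  proof -
    have "s * Q = (s*u)^2" by (simp add: Qu power2_eq_square)
    thus ?thesis using s1 u0 by simp
  qed
  have A1: "A \<le> s * u" using AQ sQ A0 real_le_rsqrt by metis
  have L1: "L \<le> r * (s * u)" using LA A1 r0 by (meson mult_left_mono order_trans)
  have t2: "(L/s) powr (p-1) * L \<le> s * (r * u) powr p"
  proof -
    have "(L/s) powr (p-1) \<le> (r*u) powr (p-1)"
      using L1 s1 L0 p1 by (intro powr_mono2) (auto simp: field_simps)
    hence "(L/s) powr (p-1) * L \<le> (r*u) powr (p-1) * (r * (s*u))"
      using L1 L0 by (intro mult_mono) auto
    also have "\<dots> = s * ((r*u) powr (p-1) * (r*u))" by (simp add: algebra_simps)
    also have "(r*u) powr (p-1) * (r*u) = (r*u) powr p"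
      using powr_add[of "r*u" "p-1" 1] r0 u0 by (cases "r*u = 0") auto
    finally show ?thesis .
  qed
  have t1: "m powr (1 - p/2) * Q powr (p/2) \<le> 2 powr (1 - p/2) * s * u powr p"
  proof -
    have hQ: "Q powr (p/2) = s powr (p/2) * u powr p"
    proof -
      have "Q powr (p/2) = s powr (p/2) * (u^2) powr (p/2)" using Qu s1 u0 by (simp add: powr_mult)
      also have "(u^2) powr (p/2) = u powr p" using u0
        by (simp add: powr_powr flip: powr_numeral)
      finally show ?thesis .
    qed
    have hm: "m powr (1 - p/2) \<le> 2 powr (1 - p/2) * s powr (1 - p/2)"
    proof -
      have "m powr (1 - p/2) \<le> (2 * s) powr (1 - p/2)" using m0 ms p2 by (intro powr_mono2) auto
      also have "(2 * s) powr (1 - p/2) = 2 powr (1 - p/2) * s powr (1 - p/2)"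
        using s1 by (simp add: powr_mult)
      finally show ?thesis .
    qed
    have hs: "s powr (1 - p/2) * s powr (p/2) = s" using s1 by (simp flip: powr_add)
    have "m powr (1 - p/2) * Q powr (p/2) \<le> 2 powr (1 - p/2) * s powr (1 - p/2) * (s powr (p/2) * u powr p)"
      unfolding hQ using hm by (intro mult_right_mono) auto
    also have "\<dots> = 2 powr (1 - p/2) * (s powr (1 - p/2) * s powr (p/2)) * u powr p"
      by (simp add: mult.assoc)
    finally show ?thesis unfolding hs .
  qed
  have key: "1 \<le> s * u powr p * (2 powr (1 - p/2) + r powr p)"
    using one t1 t2 r0 u0 by (simp add: powr_mult algebra_simps)
  have goal1: "2 powr (1/2 - 1/p) \<le> (1 + a) * s powr (1/p) * u"
  proof (rule powr_le_cancel[of p])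
    show "0 < p" using p1 by simp
    show "0 \<le> 2 powr (1/2 - 1/p)" by simp
    show "0 \<le> (1 + a) * s powr (1/p) * u" using r0 ra u0 by simp
    have lhs: "(2 powr (1/2 - 1/p)) powr p = 2 powr (p/2 - 1)"
    proof -
      have "(1/2 - 1/p) * p = p/2 - 1" using p1 by (simp add: field_simps)
      thus ?thesis by (simp add: powr_powr)
    qed
    have rhs: "((1 + a) * s powr (1/p) * u) powr p = (1+a) powr p * s * u powr p"
      using p1 s1 r0 ra u0 by (simp add: powr_mult powr_powr)
    have "2 powr (p/2 - 1) \<le> 2 powr (p/2 - 1) * (s * u powr p * (2 powr (1 - p/2) + r powr p))"
      using key by simp
    also have "\<dots> = s * u powr p * (2 powr (p/2 - 1) * 2 powr (1 - p/2) + 2 powr (p/2 - 1) * r powr p)"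
      by (simp add: algebra_simps)
    also have "2 powr (p/2 - 1) * 2 powr (1 - p/2) = 1" by (simp flip: powr_add)
    also have "s * u powr p * (1 + 2 powr (p/2 - 1) * r powr p) \<le> s * u powr p * (1 + r powr p)"
    proof -
      have "2 powr (p/2 - 1) \<le> 1" using powr_mono[of "p/2 - 1" 0 2] p2 by simp
      hence "2 powr (p/2 - 1) * r powr p \<le> r powr p" by (simp add: mult_left_le_one_le)
      thus ?thesis using s1 u0 by (intro mult_left_mono) auto
    qed
    also have "\<dots> \<le> s * u powr p * (1 + a) powr p"
    proof -
      have "1 + r powr p \<le> (1 + r) powr p" using superadd_powr r0 p1 by simp
      also have "\<dots> \<le> (1+a) powr p" using r0 ra p1 by (intro powr_mono2) auto
      finally show ?thesis using s1 u0 by (intro mult_left_mono) auto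
    qed
    finally show "(2 powr (1/2 - 1/p)) powr p \<le> ((1 + a) * s powr (1/p) * u) powr p"
      using lhs rhs by (simp add: algebra_simps)
  qed
  have "2 powr (1/2 - 1/p) * s powr (-1/p) * A \<le> 2 powr (1/2 - 1/p) * s powr (-1/p) * (s * u)"
    using A1 by (intro mult_left_mono) auto
  also have "\<dots> = 2 powr (1/2 - 1/p) * (s * s powr (-1/p)) * u" by simp
  also have "\<dots> \<le> (1 + a) * s powr (1/p) * u * (s * s powr (-1/p)) * u"
    using goal1 s1 u0 by (intro mult_right_mono) auto
  also have "(1 + a) * s powr (1/p) * u * (s * s powr (-1/p)) * u = (1+a) * (s powr (1/p) * s powr (-1/p)) * (s * u^2)"
    by (simp add: power2_eq_square algebra_simps)
  also have "s powr (1/p) * s powr (-1/p) = 1" using s1 by (simp flip: powr_add)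
  finally show ?thesis using Qu by simp
qed


lemma pmean:
  fixes y :: "'a \<Rightarrow> real" and p :: real
  assumes fin: "finite A" and p1: "1 < p" and p2: "p \<le> 2" and Q0: "0 < (\<Sum>i\<in>A. (y i)^2)"
  shows "(\<Sum>i\<in>A. \<bar>y i\<bar> powr p) \<le> real (card A) powr (1 - p/2) * (\<Sum>i\<in>A. (y i)^2) powr (p/2)"
proof -
  define Q where "Q = (\<Sum>i\<in>A. (y i)^2)"
  define m where "m = real (card A)"
  have Ane: "A \<noteq> {}" using Q0 by auto
  have m0: "0 < m" using fin Ane by (simp add: m_def card_gt_0_iff)
  define t where "t = Q / m"
  have t0: "0 < t" using Q0 m0 by (simp add: t_def Q_def)
  have trm: "\<bar>y i\<bar> powr p \<le> t powr (p/2) * ((p/2) * ((y i)^2 / t) + (1 - p/2))" for i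
  proof (cases "y i = 0")
    case True then show ?thesis using p1 p2 t0 by simp
  next
    case False
    have a0: "0 < (y i)^2 / t" using False t0 by simp
    have Y: "((y i)^2 / t) powr (p/2) * 1 powr (1 - p/2) \<le> (p/2) * ((y i)^2 / t) + (1 - p/2) * 1"
      by (rule Youngs_inequality_0) (use p1 p2 a0 in auto)
    have "((y i)^2 / t) powr (p/2) = ((y i)^2) powr (p/2) / t powr (p/2)"
      using t0 by (simp add: powr_divide)
    also have "((y i)^2) powr (p/2) = \<bar>y i\<bar> powr p"
    proof -
      have "(y i)^2 = \<bar>y i\<bar> powr 2" using False by (simp add: powr_numeral)
      hence "((y i)^2) powr (p/2) = (\<bar>y i\<bar> powr 2) powr (p/2)" by simp
      also have "\<dots> = \<bar>y i\<bar> powr p" by (subst powr_powr) simp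
      finally show ?thesis .
    qed
    finally have "\<bar>y i\<bar> powr p / t powr (p/2) \<le> (p/2) * ((y i)^2 / t) + (1 - p/2)"
      using Y by simp
    thus ?thesis using t0 by (simp add: divide_le_eq mult.commute)
  qed
  have "(\<Sum>i\<in>A. \<bar>y i\<bar> powr p) \<le> (\<Sum>i\<in>A. t powr (p/2) * ((p/2) * ((y i)^2 / t) + (1 - p/2)))"
    by (rule sum_mono) (rule trm)
  also have "\<dots> = t powr (p/2) * (\<Sum>i\<in>A. (p/2) / t * (y i)^2 + (1 - p/2))"
    by (subst sum_distrib_left) (simp add: algebra_simps)
  also have "(\<Sum>i\<in>A. (p/2) / t * (y i)^2 + (1 - p/2)) = (p/2) / t * Q + (1 - p/2) * m"
    by (simp add: sum.distrib Q_def m_def mult.commute sum_distrib_left sum_divide_distrib)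
  also have "(p/2) / t * Q + (1 - p/2) * m = m"
    using t0 m0 by (simp add: t_def field_simps)
  also have "t powr (p/2) * m = m powr (1 - p/2) * Q powr (p/2)"
  proof -
    have tm: "Q = t * m" using m0 by (simp add: t_def)
    have h1: "Q powr (p/2) = t powr (p/2) * m powr (p/2)"
      unfolding tm using t0 m0 by (simp add: powr_mult)
    have h2: "m = m powr (1 - p/2) * m powr (p/2)" using m0 by (simp flip: powr_add)
    have "t powr (p/2) * m = t powr (p/2) * (m powr (1 - p/2) * m powr (p/2))" using h2 by simp
    also have "\<dots> = m powr (1 - p/2) * (t powr (p/2) * m powr (p/2))" by (simp add: ac_simps)
    finally show ?thesis unfolding h1 .
  qed
  finally show ?thesis by (simp add: Q_def m_def)
qed

lemma sum_restr:
  assumes "g 0 = 0"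
  shows "(\<Sum>i\<in>UNIV. g (restr J x $ i)) = (\<Sum>i\<in>J. g (x $ i))"
  using assms by (simp add: restr_def if_distrib sum.If_cases)

lemma sum_split_UNIV:
  fixes f :: "'n::finite \<Rightarrow> real"
  shows "sum f UNIV = sum f J + sum f (- J)"
  using sum.subset_diff[of J UNIV f] by (simp add: Compl_eq_Diff_UNIV)

lemma le_supnorm: "\<bar>y $ i\<bar> \<le> supnorm y"
  unfolding supnorm_def by (rule Max_ge) auto

lemma dot_bound: "\<bar>x \<bullet> y\<bar> \<le> l1norm x * supnorm (y::real^'n::finite)"
proof -
  have "\<bar>x \<bullet> y\<bar> = \<bar>\<Sum>i\<in>UNIV. x $ i * y $ i\<bar>" by (simp add: inner_vec_def)
  also have "\<dots> \<le> (\<Sum>i\<in>UNIV. \<bar>x $ i\<bar> * \<bar>y $ i\<bar>)" by (rule order_trans[OF sum_abs]) (simp add: abs_mult)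
  also have "\<dots> \<le> (\<Sum>i\<in>UNIV. \<bar>x $ i\<bar> * supnorm y)"
    by (intro sum_mono mult_left_mono le_supnorm) auto
  also have "\<dots> = l1norm x * supnorm y" by (simp add: l1norm_def sum_distrib_right)
  finally show ?thesis .
qed


theorem proposition5:
  fixes Psi :: "real^'n^'n" and c p :: real and s :: nat and J :: "'n set"
  assumes "0 < c" "c < 1"
    and "1 \<le> s" "2 * s \<le> CARD('n)"
    and "1 < p" "p \<le> 2"
    and "card J \<le> s"
  shows "kappa_p Psi c p J \<ge> ereal (Cp c p * real s powr (- 1 / p)) * kappa_RE Psi c (2 * s)"
  unfolding kappa_p_def
proof (rule Inf_greatest, clarify)
  note c0 = assms(1) and c1 = assms(2) and s1 = assms(3) and p1 = assms(5) and p2 = assms(6)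
    and cJ = assms(7)
  fix x assume xc: "x \<in> cone c J" and xp: "lpnorm p x = 1"
  define r where "r = (1 + c) / (1 - c)"
  have r0: "0 \<le> r" using c0 c1 by (simp add: r_def)
  define A where "A = (\<Sum>i\<in>J. \<bar>x $ i\<bar>)"
  define L where "L = (\<Sum>i\<in>-J. \<bar>x $ i\<bar>)"
  have A0: "0 \<le> A" by (simp add: A_def sum_nonneg)
  have L0: "0 \<le> L" by (simp add: L_def sum_nonneg)
  have l1r: "l1norm (restr K x) = (\<Sum>i\<in>K. \<bar>x $ i\<bar>)" for K
    unfolding l1norm_def by (rule sum_restr) simp
  have LA: "L \<le> r * A" using xc by (simp add: cone_def l1r A_def L_def r_def)
  define T where "T = {i. i \<notin> J \<and> L / real s < \<bar>x $ i\<bar>}"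
  define J' where "J' = J \<union> T"
  have xiL: "\<bar>x $ i\<bar> \<le> L" if "i \<notin> J" for i
    unfolding L_def using that by (intro member_le_sum) auto
  have cardT: "card T \<le> s"
  proof (cases "T = {}")
    case True then show ?thesis by simp
  next
    case False
    then obtain i where "i \<in> T" by blast
    hence "L / real s < L" using xiL T_def by fastforce
    hence Lp: "0 < L" using s1 L0 by (smt (verit) divide_nonneg_nonneg of_nat_0_le_iff)
    have "real (card T) * (L / real s) \<le> (\<Sum>i\<in>T. \<bar>x $ i\<bar>)"
      by (rule sum_bounded_below) (simp add: T_def)
    also have "\<dots> \<le> L" unfolding L_def by (rule sum_mono2) (auto simp: T_def)
    finally have "real (card T) * L \<le> real s * L" using s1 by (simp add: field_simps)
    hence "real (card T) \<le> real s" using Lp by simp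
    thus ?thesis by simp
  qed
  have cardJ': "card J' \<le> 2 * s"
    using card_Un_le[of J T] cJ cardT by (simp add: J'_def)
  have JJ': "J \<subseteq> J'" by (simp add: J'_def)
  have tail: "\<bar>x $ i\<bar> \<le> L / real s" if "i \<in> - J'" for i
    using that by (auto simp: J'_def T_def)
  define Q where "Q = (\<Sum>i\<in>J'. (x $ i)^2)"
  have x0: "x \<noteq> 0"
  proof
    assume "x = 0"
    then show False using xp p1 by (simp add: lpnorm_def)
  qed
  have Q0: "0 < Q"
  proof (rule ccontr)
    assume "\<not> 0 < Q"
    hence "Q = 0" using sum_nonneg[of J' "\<lambda>i. (x $ i)^2"] by (simp add: Q_def)
    hence z1: "\<forall>i\<in>J'. x $ i = 0" unfolding Q_def by (subst (asm) sum_nonneg_eq_0_iff) auto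
    hence "A = 0" unfolding A_def by (intro sum.neutral) (use JJ' in auto)
    hence "L = 0" using LA L0 by simp
    hence "\<forall>i\<in>-J. x $ i = 0" unfolding L_def by (subst (asm) sum_nonneg_eq_0_iff) auto
    hence "x = 0" using z1 JJ' by (auto simp: vec_eq_iff)
    thus False using x0 by simp
  qed
  have xc': "x \<in> cone c J'"
  proof -
    have "(\<Sum>i\<in>-J'. \<bar>x $ i\<bar>) \<le> L" unfolding L_def using JJ' by (intro sum_mono2) auto
    also have "\<dots> \<le> r * A" by (rule LA)
    also have "\<dots> \<le> r * (\<Sum>i\<in>J'. \<bar>x $ i\<bar>)" unfolding A_def using JJ' r0
      by (intro mult_left_mono sum_mono2) auto
    finally show ?thesis by (simp add: cone_def l1r r_def)
  qed
  have Qr: "(\<Sum>i\<in>UNIV. (restr J' x $ i)^2) = Q" unfolding Q_def by (rule sum_restr) simp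
  have k1: "kappa_RE Psi c (2 * s) \<le> kappa_RE_J Psi c J'"
    unfolding kappa_RE_def by (rule Inf_lower) (use cardJ' in blast)
  have k2: "kappa_RE_J Psi c J' \<le> ereal (\<bar>x \<bullet> (Psi *v x)\<bar> / Q)"
  proof -
    have "kappa_RE_J Psi c J' \<le> (\<lambda>x. if (\<Sum>i\<in>UNIV. (restr J' x $ i)^2) = 0 then \<infinity>
               else ereal (\<bar>x \<bullet> (Psi *v x)\<bar> / (\<Sum>i\<in>UNIV. (restr J' x $ i)^2))) x"
      unfolding kappa_RE_J_def by (rule Inf_lower) (use xc' x0 in auto)
    thus ?thesis using Qr Q0 by simp
  qed
  define a where "a = r * (p - 1) powr (- 1 / p)"
  have ra: "r \<le> a"
  proof -
    have "1 powr (-1/p) \<le> (p - 1) powr (- 1 / p)" using p1 p2 by (intro powr_mono2') auto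
    thus ?thesis unfolding a_def using r0 by (simp add: mult_le_cancel_left1)
  qed
  have AQ: "A^2 \<le> real s * Q"
  proof -
    have "A^2 \<le> (\<Sum>i\<in>J. \<bar>x $ i\<bar>^2) * real (card J)" unfolding A_def by (rule sum_squared_le_sum_of_squares)
    also have "\<dots> \<le> Q * real s"
    proof (rule mult_mono)
      show "(\<Sum>i\<in>J. \<bar>x $ i\<bar>^2) \<le> Q" unfolding Q_def using JJ' by (simp, intro sum_mono2) auto
    qed (use cJ in \<open>auto simp: Q_def sum_nonneg\<close>)
    finally show ?thesis by (simp add: mult.commute)
  qed
  have mpos: "0 < real (card J')" using Q0 by (auto simp: Q_def card_gt_0_iff)
  have one: "1 \<le> real (card J') powr (1 - p/2) * Q powr (p/2) + (L / real s) powr (p-1) * L"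
  proof -
    define S where "S = (\<Sum>i\<in>UNIV. \<bar>x $ i\<bar> powr p)"
    have "S powr (1/p) = 1" using xp by (simp add: lpnorm_def S_def)
    hence "(S powr (1/p)) powr p = 1" by simp
    hence S1: "S = 1" using p1 by (simp add: powr_powr S_def sum_nonneg)
    have "S = (\<Sum>i\<in>J'. \<bar>x $ i\<bar> powr p) + (\<Sum>i\<in>-J'. \<bar>x $ i\<bar> powr p)"
      unfolding S_def by (rule sum_split_UNIV)
    also have "(\<Sum>i\<in>J'. \<bar>x $ i\<bar> powr p) \<le> real (card J') powr (1 - p/2) * Q powr (p/2)"
      unfolding Q_def by (rule pmean) (use p1 p2 Q0 in \<open>auto simp: Q_def\<close>)
    also have "(\<Sum>i\<in>-J'. \<bar>x $ i\<bar> powr p) \<le> (L / real s) powr (p-1) * L"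
    proof -
      have "(\<Sum>i\<in>-J'. \<bar>x $ i\<bar> powr p) \<le> (\<Sum>i\<in>-J'. (L / real s) powr (p-1) * \<bar>x $ i\<bar>)"
      proof (rule sum_mono)
        fix i assume i: "i \<in> -J'"
        have e: "\<bar>x $ i\<bar> powr p = \<bar>x $ i\<bar> powr (p-1) * \<bar>x $ i\<bar>"
          using powr_add[of "\<bar>x $ i\<bar>" "p-1" 1] by (cases "x $ i = 0") auto
        have "\<bar>x $ i\<bar> powr (p-1) \<le> (L / real s) powr (p-1)"
          using tail[OF i] p1 by (intro powr_mono2) auto
        thus "\<bar>x $ i\<bar> powr p \<le> (L / real s) powr (p-1) * \<bar>x $ i\<bar>"
          unfolding e by (intro mult_right_mono) auto
      qed
      also have "\<dots> = (L / real s) powr (p-1) * (\<Sum>i\<in>-J'. \<bar>x $ i\<bar>)" by (simp add: sum_distrib_left)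
      also have "\<dots> \<le> (L / real s) powr (p-1) * L"
        unfolding L_def using JJ' by (intro mult_left_mono sum_mono2) auto
      finally show ?thesis .
    qed
    finally show ?thesis using S1 by simp
  qed
  have core1: "2 powr (1/2 - 1/p) * real s powr (-1/p) * A \<le> (1 + a) * Q"
    by (rule core[OF _ p1 p2 r0 ra Q0 A0 L0 LA AQ mpos _ one]) (use s1 cardJ' in auto)
  define D where "D = Cp c p * real s powr (- 1 / p)"
  have a0: "0 < 1 + a" using ra r0 by simp
  have D0: "0 \<le> D" using c1 a0 by (simp add: D_def Cp_def a_def r_def)
  have E: "D * ((1 + r) * A) \<le> Q"
  proof -
    have h: "(1 - c) * (1 + r) = 2" using c1 by (simp add: r_def field_simps)
    have h2: "2 powr (- 1 / p - 1 / 2) * 2 = 2 powr (1/2 - 1/p)"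
      using powr_add[of 2 "- 1 / p - 1 / 2" 1] by simp
    have Cpe: "Cp c p = 2 powr (- 1 / p - 1 / 2) * (1 - c) / (1 + a)"
      unfolding Cp_def a_def r_def by (simp only: divide_inverse)
    have "D * ((1 + r) * A) = (2 powr (- 1 / p - 1 / 2) * 2) * real s powr (-1/p) * A / (1 + a)"
      unfolding D_def Cpe h[symmetric] by simp
    also have "\<dots> = 2 powr (1/2 - 1/p) * real s powr (-1/p) * A / (1 + a)"
      unfolding h2 ..
    also have "\<dots> \<le> Q" using core1 a0 by (simp add: divide_le_eq mult.commute)
    finally show ?thesis .
  qed
  have sup0: "0 \<le> supnorm (Psi *v x)" using le_supnorm[of "Psi *v x"] abs_ge_zero order_trans by blast
  have l1x: "l1norm x = A + L" unfolding l1norm_def A_def L_def by (rule sum_split_UNIV)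
  have real_ineq: "D * (\<bar>x \<bullet> (Psi *v x)\<bar> / Q) \<le> supnorm (Psi *v x)"
  proof -
    have "\<bar>x \<bullet> (Psi *v x)\<bar> \<le> (1 + r) * A * supnorm (Psi *v x)"
    proof -
      have "\<bar>x \<bullet> (Psi *v x)\<bar> \<le> (A + L) * supnorm (Psi *v x)"
        using dot_bound[of x "Psi *v x"] l1x by simp
      also have "\<dots> \<le> (1 + r) * A * supnorm (Psi *v x)"
        using LA sup0 by (intro mult_right_mono) (auto simp: algebra_simps)
      finally show ?thesis .
    qed
    hence "D * (\<bar>x \<bullet> (Psi *v x)\<bar> / Q) \<le> D * ((1 + r) * A * supnorm (Psi *v x) / Q)"
      using D0 Q0 by (intro mult_left_mono divide_right_mono) auto
    also have "\<dots> = (D * ((1 + r) * A)) * supnorm (Psi *v x) / Q" by simp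
    also have "\<dots> \<le> Q * supnorm (Psi *v x) / Q"
      using E sup0 Q0 by (intro divide_right_mono mult_right_mono) auto
    also have "\<dots> = supnorm (Psi *v x)" using Q0 by simp
    finally show ?thesis .
  qed
  have "ereal D * kappa_RE Psi c (2 * s) \<le> ereal D * ereal (\<bar>x \<bullet> (Psi *v x)\<bar> / Q)"
    using k1 k2 D0 by (intro ereal_mult_left_mono) auto
  also have "\<dots> \<le> ereal (supnorm (Psi *v x))" using real_ineq by simp
  finally show "ereal (Cp c p * real s powr (- 1 / p)) * kappa_RE Psi c (2 * s) \<le> ereal (supnorm (Psi *v x))"
    by (simp add: D_def)
qed

end
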